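(* Let $G$ be a $P_5$-free graph, let $k\ge 1$, and let $C\subseteq V(G)$ be such that $G[C]$ is connected and contains no clique of size greater than $k$. Let $D\subseteq C$ with $|D|\le k+1$ be such that every vertex of $C$ is in $D$ or has a neighbor in $D$. Let $R\subseteq N(C)$ be such that the vertex set of every connected component of $G[R]$ is a module in $G$. Then $G[R\cup C]$ has a dominating set $\widetilde D$ with $D\subseteq \widetilde D$ and $|\widetilde D\setminus D|\le \max\{k+1,3\}$ (so $|\widetilde D|\le k+1+\max\{k+1,3\}$).
   Context: For $A\subseteq V(G)$, $N(A)$ is the set of vertices outside $A$ with a neighbor in $A$. A dominating set of a graph $F$ is a set $Z\subseteq V(F)$ such that every vertex of $F$ lies in $Z$ or has a neighbor in $Z$. A set $M\subseteq V(G)$ is a module in $G$ if $N(u)\setminus M=N(v)\setminus M$ for all $u,v\in M$. A graph is $P_5$-free if it has no induced path on 5 vertices. *)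

theory Defs
  imports Main
begin

definition graph :: "'a set \<Rightarrow> ('a \<Rightarrow> 'a \<Rightarrow> bool) \<Rightarrow> bool" where
  "graph V E \<longleftrightarrow> finite V \<and> (\<forall>u v. E u v \<longrightarrow> u \<in> V \<and> v \<in> V \<and> u \<noteq> v \<and> E v u)"

definition nbhd :: "'a set \<Rightarrow> ('a \<Rightarrow> 'a \<Rightarrow> bool) \<Rightarrow> 'a set \<Rightarrow> 'a set" where
  "nbhd V E A = {v \<in> V - A. \<exists>a\<in>A. E v a}"

definition connected_on :: "('a \<Rightarrow> 'a \<Rightarrow> bool) \<Rightarrow> 'a set \<Rightarrow> bool" where
  "connected_on E S \<longleftrightarrow> S \<noteq> {} \<and>
     (\<forall>x\<in>S. \<forall>y\<in>S. (\<lambda>u v. u \<in> S \<and> v \<in> S \<and> E u v)\<^sup>*\<^sup>* x y)"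

definition is_clique :: "('a \<Rightarrow> 'a \<Rightarrow> bool) \<Rightarrow> 'a set \<Rightarrow> bool" where
  "is_clique E K \<longleftrightarrow> (\<forall>u\<in>K. \<forall>v\<in>K. u \<noteq> v \<longrightarrow> E u v)"

definition component_of :: "('a \<Rightarrow> 'a \<Rightarrow> bool) \<Rightarrow> 'a set \<Rightarrow> 'a set \<Rightarrow> bool" where
  "component_of E R X \<longleftrightarrow> X \<subseteq> R \<and> connected_on E X \<and>
     (\<forall>Y. X \<subseteq> Y \<and> Y \<subseteq> R \<and> connected_on E Y \<longrightarrow> Y = X)"

definition is_module :: "'a set \<Rightarrow> ('a \<Rightarrow> 'a \<Rightarrow> bool) \<Rightarrow> 'a set \<Rightarrow> bool" where
  "is_module V E M \<longleftrightarrow> M \<subseteq> V \<and>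
     (\<forall>u\<in>M. \<forall>v\<in>M. nbhd V E {u} - M = nbhd V E {v} - M)"

definition dominating :: "('a \<Rightarrow> 'a \<Rightarrow> bool) \<Rightarrow> 'a set \<Rightarrow> 'a set \<Rightarrow> bool" where
  "dominating E S Z \<longleftrightarrow> Z \<subseteq> S \<and> (\<forall>v\<in>S. v \<in> Z \<or> (\<exists>z\<in>Z. E v z))"

definition induced_path :: "'a set \<Rightarrow> ('a \<Rightarrow> 'a \<Rightarrow> bool) \<Rightarrow> 'a list \<Rightarrow> bool" where
  "induced_path V E xs \<longleftrightarrow> distinct xs \<and> set xs \<subseteq> V \<and>
     (\<forall>i<length xs. \<forall>j<length xs. E (xs ! i) (xs ! j) \<longleftrightarrow> (i = j + 1 \<or> j = i + 1))"

definition P5_free :: "'a set \<Rightarrow> ('a \<Rightarrow> 'a \<Rightarrow> bool) \<Rightarrow> bool" where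
  "P5_free V E \<longleftrightarrow> \<not> (\<exists>xs. length xs = 5 \<and> induced_path V E xs)"

end

theory Submission
  imports Defs
begin

definition RT :: "('a \<Rightarrow> 'a \<Rightarrow> bool) \<Rightarrow> 'a set \<Rightarrow> 'a \<Rightarrow> 'a \<Rightarrow> bool" where
  "RT E S = (\<lambda>u v. u \<in> S \<and> v \<in> S \<and> E u v)"

lemma conn_RT: "connected_on E S \<longleftrightarrow> S \<noteq> {} \<and> (\<forall>x\<in>S. \<forall>y\<in>S. (RT E S)\<^sup>*\<^sup>* x y)"
  by (simp add: connected_on_def RT_def)

lemma graph_sym: "graph V E \<Longrightarrow> E u v \<Longrightarrow> E v u"
  by (simp add: graph_def)

lemma graph_irr: "graph V E \<Longrightarrow> \<not> E u u"
  by (auto simp: graph_def)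

lemma graph_V: "graph V E \<Longrightarrow> E u v \<Longrightarrow> u \<in> V \<and> v \<in> V"
  by (simp add: graph_def)

lemma RT_rsym:
  assumes "graph V E" "(RT E S)\<^sup>*\<^sup>* x y" shows "(RT E S)\<^sup>*\<^sup>* y x"
proof -
  have "symp (RT E S)" using assms(1) by (auto simp: symp_def RT_def graph_def)
  then show ?thesis using assms(2) by (metis sympD symp_rtranclp)
qed

definition dd :: "('a \<Rightarrow> 'a \<Rightarrow> bool) \<Rightarrow> 'a set \<Rightarrow> 'a \<Rightarrow> 'a \<Rightarrow> nat" where
  "dd E S a b = (LEAST n. (RT E S ^^ n) a b)"

lemma dd_L1: "(RT E S)\<^sup>*\<^sup>* a b \<Longrightarrow> (RT E S ^^ dd E S a b) a b"
  unfolding dd_def by (metis LeastI_ex rtranclp_power)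

lemma dd_L2: "(RT E S ^^ n) a b \<Longrightarrow> dd E S a b \<le> n"
  unfolding dd_def by (rule Least_le)

lemma dd_L3: "RT E S a c \<Longrightarrow> (RT E S)\<^sup>*\<^sup>* c b \<Longrightarrow> dd E S a b \<le> Suc (dd E S c b)"
  by (meson dd_L1 dd_L2 relpowp_Suc_I2)

lemma dd_L4:
  assumes "dd E S a b = Suc m" "(RT E S)\<^sup>*\<^sup>* a b"
  shows "\<exists>c. RT E S a c \<and> dd E S c b = m \<and> (RT E S)\<^sup>*\<^sup>* c b"
proof -
  have "(RT E S ^^ Suc m) a b" using dd_L1[OF assms(2)] assms(1) by simp
  then obtain c where c: "RT E S a c" "(RT E S ^^ m) c b" using relpowp_Suc_D2 by metis
  have cb: "(RT E S)\<^sup>*\<^sup>* c b" using c(2) rtranclp_power by metis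
  have "dd E S c b \<le> m" using dd_L2[OF c(2)] .
  moreover have "Suc m \<le> Suc (dd E S c b)" using dd_L3[OF c(1) cb] assms(1) by simp
  ultimately show ?thesis using c cb by auto
qed

lemma dd_0: "dd E S a b = 0 \<Longrightarrow> (RT E S)\<^sup>*\<^sup>* a b \<Longrightarrow> a = b"
  using dd_L1 by fastforce

lemma dd_refl: "dd E S a a = 0"
  using dd_L2[where n=0 and a=a and b=a and E=E and S=S] by simp

lemma RT_mono: "S' \<subseteq> S \<Longrightarrow> RT E S' x y \<Longrightarrow> RT E S x y"
  by (auto simp: RT_def)

lemma noncut:
  assumes g: "graph V E" and c: "connected_on E T" and u: "u \<in> T" and w: "w \<in> T" "u \<noteq> w"
    and far: "\<forall>v\<in>T. dd E T v w \<le> dd E T u w"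
  shows "connected_on E (T - {u})"
proof -
  have key: "\<And>v. v \<in> T \<Longrightarrow> v \<noteq> u \<Longrightarrow> dd E T v w = n \<Longrightarrow> (RT E (T - {u}))\<^sup>*\<^sup>* v w" for n
  proof (induction n)
    case 0
    then have "v = w" using dd_0 c w conn_RT by metis
    then show ?case by simp
  next
    case (Suc n)
    have "(RT E T)\<^sup>*\<^sup>* v w" using c Suc.prems w by (simp add: conn_RT)
    then obtain c' where c': "RT E T v c'" "dd E T c' w = n" using dd_L4 Suc.prems(3) by metis
    have "c' \<in> T" using c'(1) by (simp add: RT_def)
    have "dd E T u w \<ge> Suc n" using far Suc.prems by metis
    then have "c' \<noteq> u" using c'(2) by auto
    then have "RT E (T - {u}) v c'" using c'(1) Suc.prems by (auto simp: RT_def)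
    moreover have "(RT E (T - {u}))\<^sup>*\<^sup>* c' w" using Suc.IH[OF \<open>c' \<in> T\<close> \<open>c' \<noteq> u\<close> c'(2)] .
    ultimately show ?case by (rule converse_rtranclp_into_rtranclp)
  qed
  show ?thesis unfolding conn_RT
  proof (intro conjI ballI)
    show "T - {u} \<noteq> {}" using w by auto
  next
    fix x y assume "x \<in> T - {u}" "y \<in> T - {u}"
    then have "(RT E (T - {u}))\<^sup>*\<^sup>* x w" "(RT E (T - {u}))\<^sup>*\<^sup>* y w" using key by auto
    then show "(RT E (T - {u}))\<^sup>*\<^sup>* x y" using RT_rsym[OF g] by (metis rtranclp_trans)
  qed
qed

lemma star_conn:
  assumes g: "graph V E" and "u \<in> S" and st: "\<forall>v\<in>S. v = u \<or> E v u"
  shows "connected_on E S"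
  unfolding conn_RT
proof (intro conjI ballI)
  show "S \<noteq> {}" using assms by auto
next
  fix x y assume xy: "x \<in> S" "y \<in> S"
  have "\<And>v. v \<in> S \<Longrightarrow> (RT E S)\<^sup>*\<^sup>* v u"
    using st assms(2) by (metis RT_def r_into_rtranclp rtranclp.rtrancl_refl)
  then show "(RT E S)\<^sup>*\<^sup>* x y" using xy RT_rsym[OF g] by (metis rtranclp_trans)
qed

lemma P5_lemma:
  assumes g: "graph V E" and V: "a \<in> V" "b \<in> V" "c \<in> V" "d \<in> V" "e \<in> V"
    and dist: "distinct [a,b,c,d,e]"
    and e1: "E a b" "E b c" "E c d" "E d e"
    and n: "\<not> E a c" "\<not> E a d" "\<not> E a e" "\<not> E b d" "\<not> E b e" "\<not> E c e"
  shows "\<not> P5_free V E"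
proof -
  have "induced_path V E [a,b,c,d,e]"
    unfolding induced_path_def
  proof (intro conjI allI impI)
    show "distinct [a,b,c,d,e]" by fact
    show "set [a,b,c,d,e] \<subseteq> V" using V by auto
  next
    fix i j assume "i < length [a,b,c,d,e]" "j < length [a,b,c,d,e]"
    then have ii: "i = 0 \<or> i = 1 \<or> i = 2 \<or> i = 3 \<or> i = 4"
      and jj: "j = 0 \<or> j = 1 \<or> j = 2 \<or> j = 3 \<or> j = 4" by auto
    show "E ([a,b,c,d,e] ! i) ([a,b,c,d,e] ! j) = (i = j + 1 \<or> j = i + 1)"
    proof -
      have s: "E b a" "E c b" "E d c" "E e d" using e1 graph_sym[OF g] by blast+
      have ns: "\<not> E c a" "\<not> E d a" "\<not> E e a" "\<not> E d b" "\<not> E e b" "\<not> E e c"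
        using n graph_sym[OF g] by blast+
      have ir: "\<not> E a a" "\<not> E b b" "\<not> E c c" "\<not> E d d" "\<not> E e e"
        using graph_irr[OF g] by blast+
      from ii jj show ?thesis by (elim disjE) (simp_all add: e1 n s ns ir)
    qed
  qed
  then have "\<exists>xs. length xs = 5 \<and> induced_path V E xs" by (intro exI[of _ "[a,b,c,d,e]"]) simp
  then show ?thesis by (simp add: P5_free_def)
qed


lemma RT_rtr_mono: "S' \<subseteq> S \<Longrightarrow> (RT E S')\<^sup>*\<^sup>* a b \<Longrightarrow> (RT E S)\<^sup>*\<^sup>* a b"
  using mono_rtranclp[of "RT E S'" "RT E S"] RT_mono by metis

lemma has_max: "finite T \<Longrightarrow> T \<noteq> {} \<Longrightarrow> \<exists>u\<in>T. \<forall>v\<in>T. (f v :: nat) \<le> f u"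
proof (induction T rule: finite_induct)
  case empty then show ?case by simp
next
  case (insert x F)
  show ?case
  proof (cases "F = {}")
    case True then show ?thesis by auto
  next
    case False
    then obtain u where "u \<in> F" "\<forall>v\<in>F. f v \<le> f u" using insert by auto
    then show ?thesis by (cases "f x \<le> f u") (auto intro: le_trans)
  qed
qed

lemma dd_pos: "(RT E S)\<^sup>*\<^sup>* a b \<Longrightarrow> a \<noteq> b \<Longrightarrow> dd E S a b \<ge> 1"
  using dd_0 by (metis less_one not_le)

lemma privn: "graph V E \<Longrightarrow> \<forall>s\<in>T. s \<noteq> v \<longrightarrow> \<not> E s x \<Longrightarrow> s \<in> T \<Longrightarrow> s \<noteq> v \<Longrightarrow> \<not> E x s"
  using graph_sym by metis

lemma clique_lemma:
  assumes g: "graph V E" and p5: "P5_free V E" and fin: "finite T" and TV: "T \<subseteq> V"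
    and c: "connected_on E T"
    and QT: "Q \<inter> T = {}" and QV: "Q \<subseteq> V"
    and A1: "\<forall>v\<in>T. connected_on E (T - {v}) \<longrightarrow> (\<exists>x\<in>Q. E v x \<and> (\<forall>t\<in>T. t \<noteq> v \<longrightarrow> \<not> E t x))"
    and A2: "\<forall>x\<in>Q. \<forall>y\<in>Q. E x y \<longrightarrow> (\<forall>t\<in>T. E t x \<longrightarrow> E t y)"
  shows "is_clique E T"
  unfolding is_clique_def
proof (rule ccontr)
  assume "\<not> (\<forall>u\<in>T. \<forall>v\<in>T. u \<noteq> v \<longrightarrow> E u v)"
  then obtain a b where ab: "a \<in> T" "b \<in> T" "a \<noteq> b" "\<not> E a b" by auto
  have cn: "\<And>x y. x \<in> T \<Longrightarrow> y \<in> T \<Longrightarrow> (RT E T)\<^sup>*\<^sup>* x y" using c by (simp add: conn_RT)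
  have sym: "\<And>x y. E x y \<Longrightarrow> E y x" using graph_sym[OF g] by blast
  have irr: "\<And>x. \<not> E x x" using graph_irr[OF g] by blast
  have priv_nonadj: "\<And>v w x y. v \<in> T \<Longrightarrow> w \<in> T \<Longrightarrow> v \<noteq> w \<Longrightarrow> x \<in> Q \<Longrightarrow> y \<in> Q \<Longrightarrow> E v x
      \<Longrightarrow> (\<forall>t\<in>T. t \<noteq> w \<longrightarrow> \<not> E t y) \<Longrightarrow> \<not> E x y"
    using A2 by blast
  obtain u where u: "u \<in> T" "\<forall>v\<in>T. dd E T v a \<le> dd E T u a"
    using has_max[OF fin, of "\<lambda>v. dd E T v a"] ab by auto
  have "dd E T b a \<ge> 1" using dd_pos[OF cn[OF ab(2) ab(1)]] ab(3) by auto
  then have "u \<noteq> a" using u(2) ab(2) dd_refl[of E T a] by fastforce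
  then have "connected_on E (T - {u})" using noncut[OF g c u(1) ab(1)] u by blast
  then obtain pu where pu: "pu \<in> Q" "E u pu" "\<forall>t\<in>T. t \<noteq> u \<longrightarrow> \<not> E t pu" using A1 u by blast
  obtain t where t: "t \<in> T" "\<forall>v\<in>T. dd E T v u \<le> dd E T t u"
    using has_max[OF fin, of "\<lambda>v. dd E T v u"] ab by auto
  have "dd E T a u \<ge> 1" using dd_pos[OF cn[OF ab(1) u(1)]] \<open>u \<noteq> a\<close> by auto
  then have "t \<noteq> u" using t(2) ab(1) dd_refl[of E T u] by fastforce
  then have "connected_on E (T - {t})" using noncut[OF g c t(1) u(1)] t by blast
  then obtain pt where pt: "pt \<in> Q" "E t pt" "\<forall>s\<in>T. s \<noteq> t \<longrightarrow> \<not> E s pt" using A1 t by blast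
  have ptu: "\<not> E pt pu" using priv_nonadj[OF t(1) u(1) \<open>t \<noteq> u\<close> pt(1) pu(1) pt(2) pu(3)] .
  have ptT: "pt \<notin> T" "pu \<notin> T" using QT pt pu by auto
  have inV: "pt \<in> V" "pu \<in> V" using QV pt pu by auto
  define d where "d = dd E T t u"
  have "d \<ge> 1" using dd_pos[OF cn[OF t(1) u(1)]] \<open>t \<noteq> u\<close> unfolding d_def by auto
  then consider "d = 1" | "d = 2" | m where "d = Suc (Suc (Suc m))"
  proof -
    assume h1: "d = 1 \<Longrightarrow> thesis" and h2: "d = 2 \<Longrightarrow> thesis"
      and h3: "\<And>m. d = Suc (Suc (Suc m)) \<Longrightarrow> thesis"
    show thesis
    proof (cases "d \<le> 2")
      case True then show ?thesis using h1 h2 \<open>d \<ge> 1\<close> by (cases "d = 1") auto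
    next
      case False then have "d = Suc (Suc (Suc (d - 3)))" by simp
      then show ?thesis by (rule h3)
    qed
  qed
  then show False
  proof cases
    case 1
    have st: "\<forall>v\<in>T. v = u \<or> E v u"
    proof
      fix v assume v: "v \<in> T"
      have "dd E T v u \<le> 1" using t(2) v 1 unfolding d_def by auto
      then consider "dd E T v u = 0" | "dd E T v u = Suc 0" by linarith
      then show "v = u \<or> E v u"
      proof cases
        case 1 then show ?thesis using dd_0[OF 1 cn[OF v u(1)]] by simp
      next
        case 2
        then obtain c where "RT E T v c" "dd E T c u = 0" "(RT E T)\<^sup>*\<^sup>* c u"
          using dd_L4[OF 2 cn[OF v u(1)]] by blast
        then show ?thesis using dd_0[of E T c u] by (auto simp: RT_def)
      qed
    qed
    have au: "a \<noteq> u" using \<open>u \<noteq> a\<close> by auto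
    have bu: "b \<noteq> u"
    proof
      assume "b = u" then have "E a b" using st ab(1) au by auto
      then show False using ab(4) by simp
    qed
    have Eau: "E a u" "E b u" using st ab au bu by auto
    have "connected_on E (T - {a})" using star_conn[OF g, of u "T - {a}"] st u au by auto
    then obtain pa where pa: "pa \<in> Q" "E a pa" "\<forall>s\<in>T. s \<noteq> a \<longrightarrow> \<not> E s pa" using A1 ab by blast
    have "connected_on E (T - {b})" using star_conn[OF g, of u "T - {b}"] st u bu by auto
    then obtain pb where pb: "pb \<in> Q" "E b pb" "\<forall>s\<in>T. s \<noteq> b \<longrightarrow> \<not> E s pb" using A1 ab by blast
    have pab: "\<not> E pa pb" using priv_nonadj[OF ab(1) ab(2) ab(3) pa(1) pb(1) pa(2) pb(3)] .
    have "\<not> P5_free V E"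
    proof (rule P5_lemma[OF g, of pa a u b pb])
      show "pa \<in> V" "pb \<in> V" using pa pb QV by auto
      show "a \<in> V" "u \<in> V" "b \<in> V" using ab u TV by auto
      show "distinct [pa, a, u, b, pb]" using pa pb ab u au bu QT by auto
      show "E pa a" "E a u" "E u b" "E b pb" using sym[OF pa(2)] Eau(1) sym[OF Eau(2)] pb(2) by auto
      show "\<not> E pa u" using privn[OF g pa(3) u(1)] au by auto
      show "\<not> E pa b" using privn[OF g pa(3) ab(2)] ab(3) by auto
      show "\<not> E pa pb" by (fact pab)
      show "\<not> E a b" by (fact ab(4))
      show "\<not> E a pb" using pb(3) ab(1,3) by auto
      show "\<not> E u pb" using pb(3) u(1) bu by auto
    qed
    then show False using p5 by simp
  next
    case 2
    obtain s where s: "RT E T t s" "dd E T s u = 1" "(RT E T)\<^sup>*\<^sup>* s u"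
      using dd_L4[of E T t u 1] cn t u 2 d_def by auto
    obtain s' where s': "RT E T s s'" "dd E T s' u = 0" "(RT E T)\<^sup>*\<^sup>* s' u"
      using dd_L4[of E T s u 0] s by auto
    have "s' = u" using dd_0[OF s'(2) s'(3)] .
    then have Esu: "E s u" "E t s" "s \<in> T" using s s' by (auto simp: RT_def)
    have ntu: "\<not> E t u"
    proof
      assume "E t u"
      then have "RT E T t u" using t u by (simp add: RT_def)
      then have "dd E T t u \<le> Suc (dd E T u u)" using dd_L3 rtranclp.rtrancl_refl by metis
      then show False using dd_refl[of E T u] 2 d_def by simp
    qed
    have stu: "s \<noteq> t" "s \<noteq> u" using s(2) 2 d_def dd_refl[of E T u] by auto
    have "\<not> P5_free V E"
    proof (rule P5_lemma[OF g, of pt t s u pu])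
      show "pt \<in> V" "pu \<in> V" by (fact inV)+
      show "t \<in> V" "s \<in> V" "u \<in> V" using Esu t u TV by auto
      show "distinct [pt, t, s, u, pu]" using ptT t u Esu stu \<open>t \<noteq> u\<close> pt pu ptu by auto
      show "E pt t" "E t s" "E s u" "E u pu" using sym[OF pt(2)] Esu pu(2) by auto
      show "\<not> E pt s" using privn[OF g pt(3) Esu(3)] stu by auto
      show "\<not> E pt u" using privn[OF g pt(3) u(1)] \<open>t \<noteq> u\<close> by auto
      show "\<not> E pt pu" by (fact ptu)
      show "\<not> E t u" by (fact ntu)
      show "\<not> E t pu" using pu(3) t(1) \<open>t \<noteq> u\<close> by auto
      show "\<not> E s pu" using pu(3) Esu(3) stu by auto
    qed
    then show False using p5 by simp
  next
    case 3
    obtain s1 where s1: "RT E T t s1" "dd E T s1 u = Suc (Suc m)" "(RT E T)\<^sup>*\<^sup>* s1 u"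
      using dd_L4[of E T t u "Suc (Suc m)"] cn t u 3 d_def by auto
    obtain s2 where s2: "RT E T s1 s2" "dd E T s2 u = Suc m" "(RT E T)\<^sup>*\<^sup>* s2 u"
      using dd_L4[of E T s1 u "Suc m"] s1 by auto
    obtain s3 where s3: "RT E T s2 s3" "dd E T s3 u = m" "(RT E T)\<^sup>*\<^sup>* s3 u"
      using dd_L4[of E T s2 u m] s2 by auto
    have ins: "s1 \<in> T" "s2 \<in> T" "s3 \<in> T" "E t s1" "E s1 s2" "E s2 s3"
      using s1 s2 s3 by (auto simp: RT_def)
    have n1: "\<not> E t s2" using dd_L3[of E T t s2 u] s2 3 d_def t ins by (auto simp: RT_def)
    have n2: "\<not> E t s3" using dd_L3[of E T t s3 u] s3 3 d_def t ins by (auto simp: RT_def)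
    have n3: "\<not> E s1 s3" using dd_L3[of E T s1 s3 u] s3 s1 ins by (auto simp: RT_def)
    have ds: "t \<noteq> s1" "t \<noteq> s2" "t \<noteq> s3" "s1 \<noteq> s2" "s1 \<noteq> s3" "s2 \<noteq> s3"
      using s1 s2 s3 3 d_def by auto
    have "\<not> P5_free V E"
    proof (rule P5_lemma[OF g, of pt t s1 s2 s3])
      show "pt \<in> V" by (fact inV)
      show "t \<in> V" "s1 \<in> V" "s2 \<in> V" "s3 \<in> V" using ins t TV by auto
      show "distinct [pt, t, s1, s2, s3]" using ptT ins ds t by auto
      show "E pt t" "E t s1" "E s1 s2" "E s2 s3" using sym[OF pt(2)] ins by auto
      show "\<not> E pt s1" using privn[OF g pt(3) ins(1)] ds by auto
      show "\<not> E pt s2" using privn[OF g pt(3) ins(2)] ds by auto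
      show "\<not> E pt s3" using privn[OF g pt(3) ins(3)] ds by auto
      show "\<not> E t s2" "\<not> E t s3" "\<not> E s1 s3" by (fact n1 n2 n3)+
    qed
    then show False using p5 by simp
  qed
qed


lemma comp_module:
  assumes g: "graph V E" and mod: "\<forall>X. component_of E R X \<longrightarrow> is_module V E X"
    and x: "x \<in> R" and y: "y \<in> R" and Exy: "E x y" and tV: "t \<in> V" and tR: "t \<notin> R" and Etx: "E t x"
  shows "E t y"
proof -
  define X where "X = {v \<in> R. (RT E R)\<^sup>*\<^sup>* x v}"
  have memX: "v \<in> X \<longleftrightarrow> v \<in> R \<and> (RT E R)\<^sup>*\<^sup>* x v" for v unfolding X_def by simp
  have inX: "(RT E R)\<^sup>*\<^sup>* x v \<Longrightarrow> (RT E X)\<^sup>*\<^sup>* x v" for v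
  proof (induction rule: rtranclp_induct)
    case base then show ?case by simp
  next
    case (step a b)
    have xb: "(RT E R)\<^sup>*\<^sup>* x b" using step(1,2) by (rule rtranclp.rtrancl_into_rtrancl)
    have ab: "a \<in> R" "b \<in> R" "E a b" using step(2) unfolding RT_def by auto
    have "a \<in> X" "b \<in> X" using memX ab step(1) xb by blast+
    then have "RT E X a b" using ab(3) unfolding RT_def by blast
    then show ?case using step.IH by (rule rtranclp.rtrancl_into_rtrancl[rotated])
  qed
  have xX: "x \<in> X" using x memX by blast
  have comp: "component_of E R X"
    unfolding component_of_def
  proof (intro conjI allI impI)
    show "X \<subseteq> R" using memX by blast
    show "connected_on E X" unfolding conn_RT
    proof (intro conjI ballI)
      show "X \<noteq> {}" using xX by blast
      fix a b assume "a \<in> X" "b \<in> X"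
      then have "(RT E X)\<^sup>*\<^sup>* x a" "(RT E X)\<^sup>*\<^sup>* x b" using inX memX by blast+
      then show "(RT E X)\<^sup>*\<^sup>* a b" using RT_rsym[OF g] rtranclp_trans by metis
    qed
  next
    fix Y assume Y: "X \<subseteq> Y \<and> Y \<subseteq> R \<and> connected_on E Y"
    have "Y \<subseteq> X"
    proof
      fix v assume v: "v \<in> Y"
      have "(RT E Y)\<^sup>*\<^sup>* x v" using Y xX v unfolding conn_RT by blast
      then have "(RT E R)\<^sup>*\<^sup>* x v" using RT_rtr_mono[of Y R] Y by blast
      then show "v \<in> X" using v Y memX by blast
    qed
    then show "Y = X" using Y by blast
  qed
  have "RT E R x y" using x y Exy unfolding RT_def by blast
  then have yX: "y \<in> X" using y memX by blast
  have m: "nbhd V E {x} - X = nbhd V E {y} - X" using mod comp xX yX unfolding is_module_def by blast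
  have "t \<notin> X" using tR memX by blast
  moreover have "t \<in> nbhd V E {x}" using tV tR Etx x unfolding nbhd_def by blast
  ultimately have "t \<in> nbhd V E {y}" using m by blast
  then show ?thesis unfolding nbhd_def by blast
qed

theorem claim4p5:
  fixes V :: "'a set" and E :: "'a \<Rightarrow> 'a \<Rightarrow> bool" and k :: nat
    and C D R :: "'a set"
  assumes "graph V E"
    and "P5_free V E"
    and "k \<ge> 1"
    and "C \<subseteq> V"
    and "connected_on E C"
    and "\<forall>K. K \<subseteq> C \<and> is_clique E K \<longrightarrow> card K \<le> k"
    and "D \<subseteq> C" and "card D \<le> k + 1"
    and "dominating E C D"
    and "R \<subseteq> nbhd V E C"
    and "\<forall>X. component_of E R X \<longrightarrow> is_module V E X"
  shows "\<exists>Dt. dominating E (R \<union> C) Dt \<and> D \<subseteq> Dt \<and> card (Dt - D) \<le> max (k + 1) 3"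
proof -
  note g = assms(1)
  have sym: "\<And>x y. E x y \<Longrightarrow> E y x" using graph_sym[OF g] by blast
  have finV: "finite V" using g by (simp add: graph_def)
  have RV: "R \<subseteq> V" "R \<inter> C = {}" using assms(10) by (auto simp: nbhd_def)
  have nbR: "\<forall>r\<in>R. \<exists>c\<in>C. E r c" using assms(10) by (auto simp: nbhd_def)
  define P where "P T \<longleftrightarrow> T \<subseteq> C \<and> connected_on E T \<and> (\<forall>r\<in>R. \<exists>t\<in>T. E r t)" for T
  have "P C" using assms(5) nbR by (simp add: P_def)
  then obtain T where T: "P T" and mn: "\<forall>T'. P T' \<longrightarrow> card T \<le> card T'"
    using ex_has_least_nat[of P C card] by blast
  have TC: "T \<subseteq> C" and Tc: "connected_on E T" and Td: "\<forall>r\<in>R. \<exists>t\<in>T. E r t"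
    using T by (auto simp: P_def)
  have finT: "finite T" using TC assms(4) finV finite_subset by blast
  have "is_clique E T"
  proof (rule clique_lemma[OF g assms(2) finT _ Tc, of R])
    show "T \<subseteq> V" using TC assms(4) by auto
    show "R \<inter> T = {}" using RV TC by auto
    show "R \<subseteq> V" using RV by auto
    show "\<forall>v\<in>T. connected_on E (T - {v}) \<longrightarrow> (\<exists>x\<in>R. E v x \<and> (\<forall>t\<in>T. t \<noteq> v \<longrightarrow> \<not> E t x))"
    proof (intro ballI impI)
      fix v assume v: "v \<in> T" and cv: "connected_on E (T - {v})"
      have "card (T - {v}) < card T" by (rule card_Diff1_less[OF finT v])
      have "\<not> P (T - {v})"
      proof
        assume "P (T - {v})"
        then have "card T \<le> card (T - {v})" using mn by blast
        then show False using \<open>card (T - {v}) < card T\<close> by linarith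
      qed
      moreover have "T - {v} \<subseteq> C" using TC by blast
      ultimately obtain r where r: "r \<in> R" "\<forall>t\<in>T - {v}. \<not> E r t"
        using cv unfolding P_def by blast
      obtain t0 where "t0 \<in> T" "E r t0" using Td r(1) by blast
      then have "E r v" using r(2) by blast
      then show "\<exists>x\<in>R. E v x \<and> (\<forall>t\<in>T. t \<noteq> v \<longrightarrow> \<not> E t x)" proof (intro bexI conjI)
        show "E v r" using sym[OF \<open>E r v\<close>] .
        show "\<forall>t\<in>T. t \<noteq> v \<longrightarrow> \<not> E t r"
        proof (intro ballI impI notI)
          fix t assume "t \<in> T" "t \<noteq> v" "E t r"
          then show False using r(2) sym[OF \<open>E t r\<close>] by blast
        qed
      qed (simp add: r(1))
    qed
    show "\<forall>x\<in>R. \<forall>y\<in>R. E x y \<longrightarrow> (\<forall>t\<in>T. E t x \<longrightarrow> E t y)"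
    proof (intro ballI impI)
      fix x y t assume "x \<in> R" "y \<in> R" "E x y" "t \<in> T" "E t x"
      then have "t \<in> V" "t \<notin> R" using TC assms(4) RV by blast+
      then show "E t y" using comp_module[OF g assms(11) \<open>x \<in> R\<close> \<open>y \<in> R\<close> \<open>E x y\<close> _ _ \<open>E t x\<close>] by blast
    qed
  qed
  then have cT: "card T \<le> k" using assms(6) TC by blast
  have "dominating E (R \<union> C) (D \<union> T)"
    unfolding dominating_def
  proof (intro conjI ballI)
    show "D \<union> T \<subseteq> R \<union> C" using assms(7) TC by blast
    fix v assume "v \<in> R \<union> C"
    then show "v \<in> D \<union> T \<or> (\<exists>z\<in>D \<union> T. E v z)"
    proof
      assume "v \<in> R" then show ?thesis using Td by blast
    next
      assume "v \<in> C" then show ?thesis using assms(9) unfolding dominating_def by blast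
    qed
  qed
  moreover have "card ((D \<union> T) - D) \<le> max (k + 1) 3"
  proof -
    have "card ((D \<union> T) - D) \<le> card T" using finT by (intro card_mono) auto
    then show ?thesis using cT by simp
  qed
  ultimately show ?thesis by blast
qed

end
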